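(* Let $(\mathcal{X},\mathcal{B},\lambda)$ be a measure space with $\lambda$ positive and $\sigma$-finite, $P$ a probability measure with density $f\in\mathcal{L}^2(\mathcal{X},\lambda)$ with respect to $\lambda$, and $X_1,\dots,X_N$ i.i.d. with law $P$. Let $f_1,\dots,f_m\in\mathcal{L}^2$ with $D_k=\int f_k^2d\lambda>0$, and assume there are known constants $C_k>0$ with $|f_k(x)|\le\sqrt{C_kD_k}$ for all $x$ and all $k$. Let $a>1$, $\varepsilon>0$ and $k\in\{1,\dots,m\}$, and let $$B=\left\{a^l:\ 0\le l\le\left\lfloor\frac{\log\frac{N}{\sqrt{C_kD_k}}}{\log a}\right\rfloor-1\right\}.$$ Then with $P^{\otimes N}$-probability at least $1-\varepsilon$, $$\sup_{\beta\in B}\alpha^{\inf}_k\left(\frac{\varepsilon\log a}{\log N-\frac12\log C_kD_k},\beta\right)\le\overline{\alpha}_k\le\inf_{\beta\in B}\alpha^{\sup}_k\left(\frac{\varepsilon\log a}{\log N-\frac12\log C_kD_k},\beta\right).$$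
   Context: $\overline{\alpha}_k=\frac{\int f_kf\,d\lambda}{D_k}$. For $\eta>0$ and $\beta>0$: $$\alpha^{\sup}_k(\eta,\beta)=\frac{N-N\exp\left[\frac1N\sum_{i=1}^N\log\left(1-\frac{\beta}{N}f_k(X_i)\right)-\frac{\log\frac{2m}{\eta}}{N}\right]}{D_k\beta},\quad \alpha^{\inf}_k(\eta,\beta)=\frac{N\exp\left[\frac1N\sum_{i=1}^N\log\left(1+\frac{\beta}{N}f_k(X_i)\right)-\frac{\log\frac{2m}{\eta}}{N}\right]-N}{D_k\beta}.$$ Conventions: $\sup\emptyset=-\infty$, $\inf\emptyset=+\infty$. *)

theory Defs
  imports "HOL-Probability.Probability"
begin

definition alpha_sup ::
  "nat \<Rightarrow> nat \<Rightarrow> real \<Rightarrow> ('a \<Rightarrow> real) \<Rightarrow> (nat \<Rightarrow> 'a) \<Rightarrow> real \<Rightarrow> real \<Rightarrow> real" where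
  "alpha_sup N m Dk fkk X eta beta =
     (real N - real N * exp ((\<Sum>i<N. ln (1 - beta / real N * fkk (X i))) / real N
        - ln (2 * real m / eta) / real N)) / (Dk * beta)"

definition alpha_inf ::
  "nat \<Rightarrow> nat \<Rightarrow> real \<Rightarrow> ('a \<Rightarrow> real) \<Rightarrow> (nat \<Rightarrow> 'a) \<Rightarrow> real \<Rightarrow> real \<Rightarrow> real" where
  "alpha_inf N m Dk fkk X eta beta =
     (real N * exp ((\<Sum>i<N. ln (1 + beta / real N * fkk (X i))) / real N
        - ln (2 * real m / eta) / real N) - real N) / (Dk * beta)"

end

theory Submission
  imports Defs
begin


lemma markov_prod:
  fixes g :: "'a \<Rightarrow> real"
  assumes P: "prob_space P" and g[measurable]: "g \<in> borel_measurable P"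
    and gpos: "\<And>x. x \<in> space P \<Longrightarrow> 0 \<le> g x" and gb: "\<And>x. x \<in> space P \<Longrightarrow> g x \<le> K"
    and c: "0 < c" and Epos: "0 < (\<integral>x. g x \<partial>P)"
    and A: "A \<in> sets (PiM {0..<N} (\<lambda>_. P))"
    and sub: "\<And>X. X \<in> A \<Longrightarrow> c * (\<integral>x. g x \<partial>P) ^ N \<le> (\<Prod>i\<in>{0..<N}. g (X i))"
  shows "measure (PiM {0..<N} (\<lambda>_. P)) A \<le> 1 / c"
proof -
  let ?Q = "PiM {0..<N} (\<lambda>_. P)"
  let ?E = "\<integral>x. g x \<partial>P"
  interpret Q: prob_space ?Q by (rule prob_space_PiM) (use P in auto)
  interpret pps: product_prob_space "\<lambda>_. P" "{0..<N}"
    by (simp add: P product_prob_space_axioms_def product_prob_space_def product_sigma_finite_def prob_space_imp_sigma_finite)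
  have ym[measurable]: "(\<lambda>X. \<Prod>i\<in>{0..<N}. g (X i)) \<in> borel_measurable ?Q"
    by measurable
  have gi: "integrable P g"
    by (rule finite_measure.integrable_const_bound[OF prob_space.finite_measure[OF P], where B=K]) (use gpos gb in auto)
  have yi: "integrable ?Q (\<lambda>X. \<Prod>i\<in>{0..<N}. g (X i))"
  proof (rule Q.integrable_const_bound[where B="K^N"])
    show "AE x in ?Q. norm (\<Prod>i\<in>{0..<N}. g (x i)) \<le> K ^ N"
    proof (rule AE_I2)
      fix x assume x: "x \<in> space ?Q"
      then have "\<And>i. i \<in> {0..<N} \<Longrightarrow> x i \<in> space P" by (auto simp: space_PiM)
      then have "(\<Prod>i\<in>{0..<N}. norm (g (x i))) \<le> (\<Prod>i\<in>{0..<N}. K)"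
        by (intro prod_mono) (auto simp: gpos gb)
      then show "norm (\<Prod>i\<in>{0..<N}. g (x i)) \<le> K ^ N" by (simp add: abs_prod)
    qed
  qed simp
  have int: "(\<integral>X. (\<Prod>i\<in>{0..<N}. g (X i)) \<partial>?Q) = ?E ^ N"
    using pps.product_integral_prod[of "{0..<N}" "\<lambda>_. g"] gi by simp
  have pos: "0 < c * ?E ^ N" using c Epos by simp
  have "A \<subseteq> {X \<in> space ?Q. c * ?E ^ N \<le> (\<Prod>i\<in>{0..<N}. g (X i))}"
    using sub sets.sets_into_space[OF A] by auto
  then have "measure ?Q A \<le> measure ?Q {X \<in> space ?Q. c * ?E ^ N \<le> (\<Prod>i\<in>{0..<N}. g (X i))}"
    by (intro Q.finite_measure_mono) measurable
  also have "\<dots> \<le> (\<integral>X. (\<Prod>i\<in>{0..<N}. g (X i)) \<partial>?Q) / (c * ?E ^ N)"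
  proof (rule integral_Markov_inequality_measure[OF yi A _ pos])
    show "AE x in ?Q. 0 \<le> (\<Prod>i\<in>{0..<N}. g (x i))"
      by (rule AE_I2) (auto simp: space_PiM PiE_def Pi_def intro!: prod_nonneg gpos)
  qed
  also have "\<dots> = 1 / c" using int Epos c by simp
  finally show ?thesis .
qed

lemma alg_core:
  fixes u :: "nat \<Rightarrow> real"
  assumes N: "0 < N" and u: "\<And>i. i < N \<Longrightarrow> 0 < u i" and E: "0 < E" and cst: "0 < cst"
    and lt: "E < exp ((\<Sum>i<N. ln (u i)) / real N - ln cst / real N)"
  shows "cst * E ^ N \<le> (\<Prod>i\<in>{0..<N}. u i)"
proof -
  let ?S = "\<Sum>i<N. ln (u i)"
  have "ln E < (?S - ln cst) / real N"
    using lt E by (metis diff_divide_distrib ln_exp ln_less_cancel_iff exp_gt_zero)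
  then have "real N * ln E < ?S - ln cst" using N by (simp add: field_simps)
  then have "exp (real N * ln E + ln cst) < exp ?S" by simp
  moreover have "exp (real N * ln E + ln cst) = E ^ N * cst"
    using E cst by (simp add: exp_add exp_of_nat_mult)
  moreover have "exp ?S = (\<Prod>i\<in>{0..<N}. u i)"
    using u by (simp add: exp_sum atLeast0LessThan)
  ultimately show ?thesis by (simp add: mult.commute)
qed
theorem corollary6:
  fixes M :: "'a measure" and f :: "'a \<Rightarrow> real"
    and fk :: "nat \<Rightarrow> 'a \<Rightarrow> real" and C :: "nat \<Rightarrow> real"
    and N m k :: nat and a \<epsilon> :: real
  defines "D \<equiv> (\<lambda>j. integral\<^sup>L M (\<lambda>x. (fk j x)\<^sup>2))"
  defines "P \<equiv> density M (\<lambda>x. ennreal (f x))"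
  defines "B \<equiv> {a ^ l | l::nat. int l \<le> \<lfloor>ln (real N / sqrt (C k * D k)) / ln a\<rfloor> - 1}"
  defines "\<eta> \<equiv> \<epsilon> * ln a / (ln (real N) - ln (C k * D k) / 2)"
  assumes "sigma_finite_measure M"
    and f_meas: "f \<in> borel_measurable M"
    and f_nonneg: "\<And>x. x \<in> space M \<Longrightarrow> 0 \<le> f x"
    and f_int1: "(\<integral>\<^sup>+ x. ennreal (f x) \<partial>M) = 1"
    and f_L2: "integrable M (\<lambda>x. (f x)\<^sup>2)"
    and N_pos: "0 < N"
    and fk_meas: "\<And>j. j \<in> {1..m} \<Longrightarrow> fk j \<in> borel_measurable M"
    and fk_L2: "\<And>j. j \<in> {1..m} \<Longrightarrow> integrable M (\<lambda>x. (fk j x)\<^sup>2)"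
    and D_pos: "\<And>j. j \<in> {1..m} \<Longrightarrow> 0 < D j"
    and C_pos: "\<And>j. j \<in> {1..m} \<Longrightarrow> 0 < C j"
    and fk_bound: "\<And>j x. j \<in> {1..m} \<Longrightarrow> x \<in> space M \<Longrightarrow> \<bar>fk j x\<bar> \<le> sqrt (C j * D j)"
    and a_gt1: "1 < a"
    and eps_pos: "0 < \<epsilon>"
    and k_in: "k \<in> {1..m}"
  shows "measure (PiM {0..<N} (\<lambda>_. P))
           {X \<in> space (PiM {0..<N} (\<lambda>_. P)).
              (SUP \<beta>\<in>B. ereal (alpha_inf N m (D k) (fk k) X \<eta> \<beta>))
                \<le> ereal (integral\<^sup>L M (\<lambda>x. fk k x * f x) / D k)
              \<and> ereal (integral\<^sup>L M (\<lambda>x. fk k x * f x) / D k)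
                \<le> (INF \<beta>\<in>B. ereal (alpha_sup N m (D k) (fk k) X \<eta> \<beta>))}
         \<ge> 1 - \<epsilon>"
proof -
  let ?Q = "PiM {0..<N} (\<lambda>_. P)"
  define I where "I = integral\<^sup>L M (\<lambda>x. fk k x * f x)"
  define s where "s = sqrt (C k * D k)"
  define t where "t = ln (real N / s) / ln a"
  define L where "L = {l::nat. int l \<le> \<lfloor>t\<rfloor> - 1}"
  have CD: "0 < C k * D k" using C_pos D_pos k_in by simp
  have s_pos: "0 < s" using CD s_def by simp
  have lna: "0 < ln a" using a_gt1 by simp
  have m_pos: "0 < m" using k_in by simp
  have B_eq: "B = (\<lambda>l. a ^ l) ` L" unfolding B_def L_def t_def s_def by auto
  have fkm[measurable]: "fk k \<in> borel_measurable M" using fk_meas k_in by simp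
  have fkb: "\<And>x. x \<in> space M \<Longrightarrow> \<bar>fk k x\<bar> \<le> s" using fk_bound k_in s_def by simp
  have PP: "prob_space P"
  proof (rule prob_spaceI)
    show "emeasure P (space P) = 1" unfolding P_def
      using f_int1 f_meas by (simp add: emeasure_density)
  qed
  interpret Pp: prob_space P by (rule PP)
  interpret Q: prob_space ?Q by (rule prob_space_PiM) (use PP in auto)
  have spP: "space P = space M" unfolding P_def by simp
  have fkPm[measurable]: "fk k \<in> borel_measurable P" unfolding P_def by simp
  have fkPi: "integrable P (fk k)"
    by (rule Pp.integrable_const_bound[where B=s]) (use fkb spP in auto)
  have J: "(\<integral>x. fk k x \<partial>P) = I"
    unfolding P_def I_def
    by (subst integral_density) (use f_meas f_nonneg in \<open>auto simp: mult.commute\<close>)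
  have intg: "(\<integral>x. (1 + b * fk k x) \<partial>P) = 1 + b * I" for b
    using fkPi J by (simp add: Bochner_Integration.integral_add Pp.prob_space)
  have intg': "(\<integral>x. (1 - b * fk k x) \<partial>P) = 1 - b * I" for b
    using fkPi J by (simp add: Bochner_Integration.integral_diff Pp.prob_space)
  have Dk: "0 < D k" using D_pos k_in by simp
  define Bi where "Bi = (\<lambda>\<beta>. {X \<in> space ?Q. I / D k < alpha_inf N m (D k) (fk k) X \<eta> \<beta>})"
  define Bs where "Bs = (\<lambda>\<beta>. {X \<in> space ?Q. alpha_sup N m (D k) (fk k) X \<eta> \<beta> < I / D k})"
  have Bim[measurable]: "Bi \<beta> \<in> sets ?Q" for \<beta>
    unfolding Bi_def alpha_inf_def by measurable
  have Bsm[measurable]: "Bs \<beta> \<in> sets ?Q" for \<beta>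
    unfolding Bs_def alpha_sup_def by measurable
  have lnNs: "ln (real N / s) = ln (real N) - ln (C k * D k) / 2"
  proof -
    have "ln s = ln (C k * D k) / 2" unfolding s_def using CD by (simp add: ln_sqrt)
    then show ?thesis using N_pos s_pos by (simp add: ln_div)
  qed
  have bounds: "measure ?Q (Bi (a ^ l)) \<le> \<eta> / (2 * m) \<and> measure ?Q (Bs (a ^ l)) \<le> \<eta> / (2 * m)"
    if l: "l \<in> L" for l
  proof -
    define \<beta> where "\<beta> = a ^ l"
    have bpos: "0 < \<beta>" using a_gt1 \<beta>_def by simp
    have "int l + 1 \<le> \<lfloor>t\<rfloor>" using l unfolding L_def by simp
    then have "real (l + 1) \<le> t" by linarith
    then have t1: "1 \<le> t" by simp
    have "ln (a ^ (l + 1)) = real (l + 1) * ln a" using a_gt1 by (subst ln_realpow) auto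
    also have "\<dots> \<le> t * ln a" using \<open>real (l + 1) \<le> t\<close> lna by (intro mult_right_mono) auto
    also have "\<dots> = ln (real N / s)" using lna t_def by simp
    finally have "a ^ (l + 1) \<le> real N / s"
      using a_gt1 N_pos s_pos by (subst (asm) ln_le_cancel_iff) auto
    then have "a * \<beta> * s \<le> real N" using s_pos \<beta>_def by (simp add: field_simps)
    then have bs: "\<beta> * s / real N \<le> 1 / a" using a_gt1 N_pos by (simp add: field_simps)
    have small: "\<bar>\<beta> / real N * fk k x\<bar> \<le> 1 / a" if x: "x \<in> space M" for x
    proof -
      have "\<bar>\<beta> / real N * fk k x\<bar> = \<beta> / real N * \<bar>fk k x\<bar>" using bpos by (simp add: abs_mult)
      also have "\<dots> \<le> \<beta> / real N * s" using fkb[OF x] bpos N_pos by (intro mult_left_mono) auto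
      finally show ?thesis using bs by simp
    qed
    have inva: "1 / a < 1" "0 < 1 / a" using a_gt1 by auto
    have lnts: "ln (real N / s) = t * ln a" using lna t_def by simp
    have den: "ln (real N) - ln (C k * D k) / 2 = t * ln a" using lnNs lnts by simp
    have eta_eq: "\<eta> = \<epsilon> / t" unfolding \<eta>_def den using lna t1 by simp
    have eta_pos: "0 < \<eta>" using eta_eq eps_pos t1 by simp
    have cst: "0 < 2 * real m / \<eta>" using eta_pos m_pos by simp
    have gp: "1 - 1 / a \<le> 1 + \<beta> / real N * fk k x" "1 + \<beta> / real N * fk k x \<le> 2"
      "1 - 1 / a \<le> 1 - \<beta> / real N * fk k x" "1 - \<beta> / real N * fk k x \<le> 2"
      if "x \<in> space M" for x
    proof -
      have gen: "\<And>y::real. \<bar>y\<bar> \<le> 1/a \<Longrightarrow> 1 - 1/a \<le> 1 + y \<and> 1 + y \<le> 2 \<and> 1 - 1/a \<le> 1 - y \<and> 1 - y \<le> 2"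
        using inva by arith
      show "1 - 1 / a \<le> 1 + \<beta> / real N * fk k x" "1 + \<beta> / real N * fk k x \<le> 2"
      "1 - 1 / a \<le> 1 - \<beta> / real N * fk k x" "1 - \<beta> / real N * fk k x \<le> 2"
        using gen[OF small[OF that]] by auto
    qed
    have gpos: "0 < 1 + \<beta> / real N * fk k x" "0 < 1 - \<beta> / real N * fk k x"
      if "x \<in> space M" for x
      using gp[OF that] inva by linarith+
    have gi1: "integrable P (\<lambda>x. 1 + \<beta> / real N * fk k x)" using fkPi by simp
    have gi2: "integrable P (\<lambda>x. 1 - \<beta> / real N * fk k x)" using fkPi by simp
    have "1 - 1 / a \<le> (\<integral>x. (1 + \<beta> / real N * fk k x) \<partial>P)"
      by (intro Pp.integral_ge_const[OF gi1] AE_I2) (metis gp(1) spP)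
    also have "\<dots> = 1 + \<beta> / real N * I" by (rule intg)
    finally have E1: "1 - 1 / a \<le> 1 + \<beta> / real N * I" .
    have "1 - 1 / a \<le> (\<integral>x. (1 - \<beta> / real N * fk k x) \<partial>P)"
      by (intro Pp.integral_ge_const[OF gi2] AE_I2) (metis gp(3) spP)
    also have "\<dots> = 1 - \<beta> / real N * I" by (rule intg')
    finally have E2: "1 - 1 / a \<le> 1 - \<beta> / real N * I" .
    have E1p: "0 < 1 + \<beta> / real N * I" using E1 inva by linarith
    have E2p: "0 < 1 - \<beta> / real N * I" using E2 inva by linarith
    have sp: "X i \<in> space M" if "X \<in> space ?Q" "i < N" for X i
      using that spP by (auto simp: space_PiM PiE_def Pi_def)
    have "measure ?Q (Bi \<beta>) \<le> 1 / (2 * real m / \<eta>)"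
    proof (rule markov_prod[OF PP _ _ _ cst])
      show "(\<lambda>x. 1 + \<beta> / real N * fk k x) \<in> borel_measurable P" by measurable
      show "0 \<le> 1 + \<beta> / real N * fk k x" if "x \<in> space P" for x using gpos(1)[of x] that spP by simp
      show "1 + \<beta> / real N * fk k x \<le> 2" if "x \<in> space P" for x using gp(2)[of x] that spP by simp
      show "0 < (\<integral>x. (1 + \<beta> / real N * fk k x) \<partial>P)" using intg[of "\<beta> / real N"] E1 inva by linarith
      show "Bi \<beta> \<in> sets ?Q" by simp
      fix X assume X: "X \<in> Bi \<beta>"
      then have XQ: "X \<in> space ?Q" and lt: "I / D k < alpha_inf N m (D k) (fk k) X \<eta> \<beta>"
        unfolding Bi_def by auto
      define ex where "ex = exp ((\<Sum>i<N. ln (1 + \<beta> / real N * fk k (X i))) / real N - ln (2 * real m / \<eta>) / real N)"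
      have "I / D k < (real N * ex - real N) / (D k * \<beta>)"
        using lt unfolding alpha_inf_def ex_def by simp
      then have "I * \<beta> < real N * ex - real N" using Dk bpos by (simp add: field_simps)
      then have "1 + \<beta> / real N * I < ex" using N_pos by (simp add: field_simps)
      then have "2 * real m / \<eta> * (1 + \<beta> / real N * I) ^ N \<le> (\<Prod>i\<in>{0..<N}. 1 + \<beta> / real N * fk k (X i))"
        by (intro alg_core[OF N_pos _ E1p cst]) (use gpos sp XQ ex_def in auto)
      then show "2 * real m / \<eta> * (\<integral>x. (1 + \<beta> / real N * fk k x) \<partial>P) ^ N \<le> (\<Prod>i\<in>{0..<N}. 1 + \<beta> / real N * fk k (X i))"
        using intg[of "\<beta> / real N"] by simp
    qed
    moreover have "measure ?Q (Bs \<beta>) \<le> 1 / (2 * real m / \<eta>)"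
    proof (rule markov_prod[OF PP _ _ _ cst])
      show "(\<lambda>x. 1 - \<beta> / real N * fk k x) \<in> borel_measurable P" by measurable
      show "0 \<le> 1 - \<beta> / real N * fk k x" if "x \<in> space P" for x using gpos(2)[of x] that spP by simp
      show "1 - \<beta> / real N * fk k x \<le> 2" if "x \<in> space P" for x using gp(4)[of x] that spP by simp
      show "0 < (\<integral>x. (1 - \<beta> / real N * fk k x) \<partial>P)" using intg'[of "\<beta> / real N"] E2 inva by linarith
      show "Bs \<beta> \<in> sets ?Q" by simp
      fix X assume X: "X \<in> Bs \<beta>"
      then have XQ: "X \<in> space ?Q" and lt: "alpha_sup N m (D k) (fk k) X \<eta> \<beta> < I / D k"
        unfolding Bs_def by auto
      define ex where "ex = exp ((\<Sum>i<N. ln (1 - \<beta> / real N * fk k (X i))) / real N - ln (2 * real m / \<eta>) / real N)"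
      have "(real N - real N * ex) / (D k * \<beta>) < I / D k"
        using lt unfolding alpha_sup_def ex_def by simp
      then have "D k * (real N - real N * ex) < D k * (I * \<beta>)" using Dk bpos by (simp add: field_simps)
      then have "real N - real N * ex < I * \<beta>" using Dk by simp
      then have "1 - \<beta> / real N * I < ex" using N_pos by (simp add: field_simps)
      then have "2 * real m / \<eta> * (1 - \<beta> / real N * I) ^ N \<le> (\<Prod>i\<in>{0..<N}. 1 - \<beta> / real N * fk k (X i))"
        by (intro alg_core[OF N_pos _ E2p cst]) (use gpos sp XQ ex_def in auto)
      then show "2 * real m / \<eta> * (\<integral>x. (1 - \<beta> / real N * fk k x) \<partial>P) ^ N \<le> (\<Prod>i\<in>{0..<N}. 1 - \<beta> / real N * fk k (X i))"
        using intg'[of "\<beta> / real N"] by simp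
    qed
    ultimately show ?thesis using eta_pos m_pos \<beta>_def by simp
  qed
  define U where "U = (\<Union>\<beta>\<in>B. Bi \<beta> \<union> Bs \<beta>)"
  have Lsub: "L \<subseteq> {..<nat \<lfloor>t\<rfloor>}" unfolding L_def by auto
  have finL: "finite L" using Lsub finite_subset by blast
  have finB: "finite B" using finL B_eq by simp
  have Um: "U \<in> sets ?Q" unfolding U_def using finB by (intro sets.finite_UN) auto
  have geq: "{X \<in> space ?Q.
              (SUP \<beta>\<in>B. ereal (alpha_inf N m (D k) (fk k) X \<eta> \<beta>))
                \<le> ereal (integral\<^sup>L M (\<lambda>x. fk k x * f x) / D k)
              \<and> ereal (integral\<^sup>L M (\<lambda>x. fk k x * f x) / D k)
                \<le> (INF \<beta>\<in>B. ereal (alpha_sup N m (D k) (fk k) X \<eta> \<beta>))} = space ?Q - U"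
    unfolding U_def Bi_def Bs_def I_def[symmetric]
    by (auto simp: SUP_le_iff le_INF_iff not_less)
  have "measure ?Q U \<le> (\<Sum>\<beta>\<in>B. measure ?Q (Bi \<beta> \<union> Bs \<beta>))"
    unfolding U_def by (rule Q.finite_measure_subadditive_finite) (use finB in auto)
  also have "\<dots> \<le> (\<Sum>\<beta>\<in>B. \<eta> / real m)"
  proof (rule sum_mono)
    fix \<beta> assume "\<beta> \<in> B"
    then obtain l where l: "l \<in> L" and b: "\<beta> = a ^ l" using B_eq by auto
    have "measure ?Q (Bi \<beta> \<union> Bs \<beta>) \<le> measure ?Q (Bi \<beta>) + measure ?Q (Bs \<beta>)"
      by (rule measure_Un_le) auto
    also have "\<dots> \<le> \<eta> / (2 * m) + \<eta> / (2 * m)" using bounds[OF l] b by simp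
    finally show "measure ?Q (Bi \<beta> \<union> Bs \<beta>) \<le> \<eta> / real m" by simp
  qed
  also have "\<dots> = real (card B) * \<eta> / real m" by simp
  finally have mU: "measure ?Q U \<le> real (card B) * \<eta> / real m" .
  have "measure ?Q U \<le> \<epsilon>"
  proof (cases "B = {}")
    case True
    then show ?thesis using mU eps_pos by simp
  next
    case False
    then obtain l where l: "l \<in> L" using B_eq by auto
    have "int l + 1 \<le> \<lfloor>t\<rfloor>" using l unfolding L_def by simp
    then have t1: "1 \<le> t" by linarith
    have lnts: "ln (real N / s) = t * ln a" using lna t_def by simp
    have den: "ln (real N) - ln (C k * D k) / 2 = t * ln a" using lnNs lnts by simp
    have eta_eq: "\<eta> = \<epsilon> / t" unfolding \<eta>_def den using lna t1 by simp
    have "card B \<le> card L" using B_eq card_image_le finL by simp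
    also have "\<dots> \<le> nat \<lfloor>t\<rfloor>" using card_mono[OF _ Lsub] by simp
    finally have "real (card B) \<le> t" using t1 by linarith
    then have "real (card B) * \<eta> \<le> t * \<eta>" using eta_eq eps_pos t1 by (intro mult_right_mono) auto
    also have "\<dots> = \<epsilon>" using eta_eq t1 by simp
    finally have "real (card B) * \<eta> / real m \<le> \<epsilon> / real m" using m_pos by (simp add: divide_right_mono)
    also have "\<dots> \<le> \<epsilon>" using m_pos eps_pos by (simp add: divide_le_eq)
    finally show ?thesis using mU by simp
  qed
  then show ?thesis unfolding geq using Q.prob_compl[OF Um] by simp
qed

end
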